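(* Let $U$ be a Banach space and $F$ a Banach lattice with partial order $\leqslant_F$. Let $A\colon U\to F$ be a linear, continuous and injective operator, let $f\in F$ and let $\bar u\in U$ be the exact solution of $A\bar u=f$. Let $(f^l_n)_{n\in\mathbb N}$, $(f^u_n)_{n\in\mathbb N}$ be sequences in $F$ such that for all $n$: $f^l_{n+1}\geqslant_F f^l_n$, $f^u_{n+1}\leqslant_F f^u_n$, $f^l_n\leqslant_F f\leqslant_F f^u_n$, and $\|f^l_n-f^u_n\|\to 0$ as $n\to\infty$. (There are no errors in the operator $A$.) Define the feasible sets $$U_n=\{u\in U:\ f^l_n\leqslant_F Au\leqslant_F f^u_n\}.$$ Let $R\colon U\to\mathbb R\cup\{+\infty\}$ be a functional satisfying either (I) $R$ is bounded from below on $U$, $R$ is lower semi-continuous, and the level sets $\{u: R(u)\leqslant C\}$ ($C$ constant) are sequentially compact in $U$ in the norm topology; or (II) $R$ is bounded from below on $U$, $R$ is weakly lower semi-continuous, the level sets $\{u: R(u)\leqslant C\}$ are weakly sequentially compact in $U$, and $R$ has the Radon–Riesz property. Let $u_n=\operatorname{argmin}_{u\in U_n}R(u)$. Then $u_n\to\bar u$ strongly in $U$ and $R(u_n)\to R(\bar u)$.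
   Context: A functional $R\colon U\to\mathbb R$ has the Radon–Riesz property if for any sequence $u_n\in U$, weak convergence $u_n\rightharpoonup u_0$ together with convergence of values $R(u_n)\to R(u_0)$ implies strong convergence $u_n\to u_0$. A Banach lattice is a vector lattice with a complete monotone norm ($|x|\leqslant|y|\Rightarrow\|x\|\leqslant\|y\|$). *)

theory Defs
  imports "HOL-Analysis.Analysis"
begin

text \<open>The modulus is sup x (-x).\<close>
class banach_lattice = banach + lattice +
  assumes bl_add_left_mono: "x \<le> y \<Longrightarrow> z + x \<le> z + y"
    and bl_scaleR_mono: "x \<le> y \<Longrightarrow> 0 \<le> c \<Longrightarrow> c *\<^sub>R x \<le> c *\<^sub>R y"
    and bl_norm_mono: "sup x (- x) \<le> sup y (- y) \<Longrightarrow> norm x \<le> norm y"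

definition weak_conv :: "(nat \<Rightarrow> 'a::real_normed_vector) \<Rightarrow> 'a \<Rightarrow> bool" where
  "weak_conv s x \<longleftrightarrow>
     (\<forall>\<phi>::'a \<Rightarrow> real. bounded_linear \<phi> \<longrightarrow> (\<lambda>n. \<phi> (s n)) \<longlonglongrightarrow> \<phi> x)"

definition lsc :: "('a::topological_space \<Rightarrow> ereal) \<Rightarrow> bool" where
  "lsc R \<longleftrightarrow> (\<forall>c. closed {u. R u \<le> c})"

definition weakly_lsc :: "('a::real_normed_vector \<Rightarrow> ereal) \<Rightarrow> bool" where
  "weakly_lsc R \<longleftrightarrow> (\<forall>s x. weak_conv s x \<longrightarrow> R x \<le> liminf (\<lambda>n. R (s n)))"

definition weakly_seq_compact :: "'a::real_normed_vector set \<Rightarrow> bool" where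
  "weakly_seq_compact S \<longleftrightarrow>
     (\<forall>f::nat \<Rightarrow> 'a. (\<forall>n. f n \<in> S) \<longrightarrow> (\<exists>l\<in>S. \<exists>r. strict_mono r \<and> weak_conv (f \<circ> r) l))"

definition radon_riesz :: "('a::real_normed_vector \<Rightarrow> ereal) \<Rightarrow> bool" where
  "radon_riesz R \<longleftrightarrow>
     (\<forall>s x. weak_conv s x \<and> (\<lambda>n. R (s n)) \<longlonglongrightarrow> R x \<longrightarrow> s \<longlonglongrightarrow> x)"

end

theory Submission
  imports Defs
begin


definition dom_sub :: "('a::real_normed_vector \<times> real) set \<Rightarrow> bool" where
  "dom_sub G \<longleftrightarrow> (0,0) \<in> G \<and> (\<forall>a b a' b'. (a,b)\<in>G \<longrightarrow> (a',b')\<in>G \<longrightarrow> (a+a', b+b') \<in> G)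
     \<and> (\<forall>c a b. (a,b)\<in>G \<longrightarrow> (c *\<^sub>R a, c*b) \<in> G) \<and> (\<forall>a b. (a,b)\<in>G \<longrightarrow> b \<le> norm a)"

lemma dom_sub_0: "dom_sub G \<Longrightarrow> (0,0) \<in> G" unfolding dom_sub_def by blast
lemma dom_sub_add: "dom_sub G \<Longrightarrow> (a,b)\<in>G \<Longrightarrow> (a',b')\<in>G \<Longrightarrow> (a+a', b+b') \<in> G"
  unfolding dom_sub_def by blast
lemma dom_sub_scale: "dom_sub G \<Longrightarrow> (a,b)\<in>G \<Longrightarrow> (c *\<^sub>R a, c*b) \<in> G"
  unfolding dom_sub_def by blast
lemma dom_sub_le: "dom_sub G \<Longrightarrow> (a,b)\<in>G \<Longrightarrow> b \<le> norm a"
  unfolding dom_sub_def by blast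

lemma dom_sub_fun:
  assumes "dom_sub G" "(a,b)\<in>G" "(a,b')\<in>G" shows "b = b'"
proof -
  have "((-1) *\<^sub>R a, (-1)*b') \<in> G" using assms unfolding dom_sub_def by blast
  hence "(a + (-1) *\<^sub>R a, b + (-1)*b') \<in> G" using assms unfolding dom_sub_def by blast
  hence 1: "b - b' \<le> 0" using assms unfolding dom_sub_def by fastforce
  have "((-1) *\<^sub>R a, (-1)*b) \<in> G" using assms unfolding dom_sub_def by blast
  hence "(a + (-1) *\<^sub>R a, b' + (-1)*b) \<in> G" using assms unfolding dom_sub_def by blast
  hence "b' - b \<le> 0" using assms unfolding dom_sub_def by fastforce
  with 1 show ?thesis by simp
qed

lemma dom_sub_extend:
  assumes G: "dom_sub G" and y: "y \<notin> fst ` G"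
  shows "\<exists>G'. dom_sub G' \<and> G \<subseteq> G' \<and> G' \<noteq> G"
proof -
  define S where "S = {b - norm (a - y) | a b. (a,b) \<in> G}"
  have S0: "0 - norm (0 - y) \<in> S" using G unfolding S_def dom_sub_def by blast
  have Sb: "s \<le> norm (a2 + y) - b2" if "s \<in> S" "(a2,b2) \<in> G" for s a2 b2
  proof -
    from that obtain a1 b1 where s: "s = b1 - norm (a1 - y)" "(a1,b1)\<in>G" unfolding S_def by blast
    have "(a1+a2, b1+b2) \<in> G" using G s that unfolding dom_sub_def by blast
    hence "b1 + b2 \<le> norm (a1+a2)" using G unfolding dom_sub_def by blast
    also have "norm (a1 + a2) \<le> norm (a1 - y) + norm (a2 + y)"
      using norm_triangle_ineq[of "a1 - y" "a2 + y"] by simp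
    finally show ?thesis using s by simp
  qed
  have bdd: "bdd_above S" using Sb[of _ 0 0] G unfolding dom_sub_def bdd_above_def by blast
  define c where "c = Sup S"
  have cU: "c \<le> norm (a2 + y) - b2" if "(a2,b2) \<in> G" for a2 b2
    unfolding c_def using S0 Sb[OF _ that] by (intro cSup_least) auto
  have cL: "b1 - norm (a1 - y) \<le> c" if "(a1,b1) \<in> G" for a1 b1
    unfolding c_def using bdd that by (intro cSup_upper) (auto simp: S_def)
  define G' where "G' = {(a + t *\<^sub>R y, b + t * c) | a b t. (a,b) \<in> G}"
  have G'I: "(a + t *\<^sub>R y, b + t * c) \<in> G'" if "(a,b) \<in> G" for a b t
    unfolding G'_def using that by blast
  have "dom_sub G'"
    unfolding dom_sub_def
  proof (intro conjI allI impI)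
    show "(0,0) \<in> G'" unfolding G'_def using G unfolding dom_sub_def by force
  next
    fix a b a' b' assume "(a,b) \<in> G'" "(a',b') \<in> G'"
    then obtain a1 b1 t1 a2 b2 t2 where "(a1,b1)\<in>G" "(a2,b2)\<in>G"
      "a = a1 + t1 *\<^sub>R y" "b = b1 + t1 * c" "a' = a2 + t2 *\<^sub>R y" "b' = b2 + t2*c"
      unfolding G'_def by blast
    moreover have "(a1+a2, b1+b2) \<in> G" using G calculation unfolding dom_sub_def by blast
    ultimately show "(a+a', b+b') \<in> G'" using G'I[of "a1+a2" "b1+b2" "t1+t2"]
      by (simp add: algebra_simps scaleR_add_left)
  next
    fix k a b assume "(a,b) \<in> G'"
    then obtain a1 b1 t1 where "(a1,b1)\<in>G" "a = a1 + t1 *\<^sub>R y" "b = b1 + t1 * c"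
      unfolding G'_def by blast
    moreover have "(k *\<^sub>R a1, k*b1) \<in> G" using G calculation unfolding dom_sub_def by blast
    ultimately show "(k *\<^sub>R a, k*b) \<in> G'" using G'I[of "k *\<^sub>R a1" "k*b1" "k*t1"]
      by (simp add: algebra_simps)
  next
    fix a b assume "(a,b) \<in> G'"
    then obtain a1 b1 t where ab: "(a1,b1)\<in>G" "a = a1 + t *\<^sub>R y" "b = b1 + t * c"
      unfolding G'_def by blast
    consider "t = 0" | "t > 0" | "t < 0" by linarith
    then show "b \<le> norm a"
    proof cases
      case 1 then show ?thesis using ab G unfolding dom_sub_def by auto
    next
      case 2
      have "((1/t) *\<^sub>R a1, (1/t)*b1) \<in> G" using G ab unfolding dom_sub_def by blast
      from cU[OF this] have "t * c \<le> t * (norm ((1/t) *\<^sub>R a1 + y) - (1/t)*b1)"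
        using 2 by (simp add: mult_left_mono)
      also have "\<dots> = norm (t *\<^sub>R ((1/t) *\<^sub>R a1 + y)) - b1" using 2
        by (simp only: norm_scaleR right_diff_distrib abs_of_pos) simp
      also have "t *\<^sub>R ((1/t) *\<^sub>R a1 + y) = a" using 2 ab by (simp add: algebra_simps)
      finally show ?thesis using ab by simp
    next
      case 3
      define s where "s = -t"
      have s: "s > 0" using 3 s_def by simp
      have "((1/s) *\<^sub>R a1, (1/s)*b1) \<in> G" using G ab unfolding dom_sub_def by blast
      from cL[OF this] have e1: "s * ((1/s)*b1 - norm ((1/s) *\<^sub>R a1 - y)) \<le> s * c"
        using s by (simp add: mult_left_mono)
      have e2: "s * ((1/s)*b1 - norm ((1/s) *\<^sub>R a1 - y)) = b1 - norm (s *\<^sub>R ((1/s) *\<^sub>R a1 - y))"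
      proof -
        have "norm (s *\<^sub>R ((1/s) *\<^sub>R a1 - y)) = s * norm ((1/s) *\<^sub>R a1 - y)" using s by simp
        moreover have "s * ((1/s)*b1) = b1" using s by simp
        ultimately show ?thesis by (metis right_diff_distrib)
      qed
      have e3: "s *\<^sub>R ((1/s) *\<^sub>R a1 - y) = a1 - s *\<^sub>R y" using s by (simp add: scaleR_diff_right)
      have e4: "a = a1 - s *\<^sub>R y" using ab s_def by simp
      have e5: "norm (s *\<^sub>R ((1/s) *\<^sub>R a1 - y)) = norm a" by (simp only: e3 e4)
      have e6: "b1 - norm a \<le> s * c" using e1 e2 e5 by linarith
      have e7: "b = b1 - s * c" using ab(3) s_def by simp
      show ?thesis using e6 e7 by linarith
    qed
  qed
  moreover have "G \<subseteq> G'" unfolding G'_def by force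
  moreover have "(y, c) \<in> G'" using G'I[of 0 0 1] G unfolding dom_sub_def by simp
  hence "G' \<noteq> G" using y by force
  ultimately show ?thesis by blast
qed

lemma hahn_banach_norm:
  fixes x :: "'a::real_normed_vector"
  shows "\<exists>\<phi>. bounded_linear \<phi> \<and> \<phi> x = norm x"
proof -
  define A where "A = {G::('a\<times>real) set. dom_sub G \<and> (x, norm x) \<in> G}"
  define G0 where "G0 = range (\<lambda>t. (t *\<^sub>R x, t * norm x))"
  have G0: "G0 \<in> A" unfolding A_def dom_sub_def G0_def
  proof (intro CollectI conjI allI impI)
    show "(0::'a, 0::real) \<in> range (\<lambda>t. (t *\<^sub>R x, t * norm x))" by (auto intro!: image_eqI[of _ _ 0])
    show "(x, norm x) \<in> range (\<lambda>t. (t *\<^sub>R x, t * norm x))" by (auto intro!: image_eqI[of _ _ 1])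
  next
    fix a b a' b' assume "(a,b) \<in> range (\<lambda>t. (t *\<^sub>R x, t * norm x))" "(a',b') \<in> range (\<lambda>t. (t *\<^sub>R x, t * norm x))"
    then obtain t t' where "a = t *\<^sub>R x" "b = t * norm x" "a' = t' *\<^sub>R x" "b' = t' * norm x" by auto
    then show "(a+a', b+b') \<in> range (\<lambda>t. (t *\<^sub>R x, t * norm x))"
      by (auto intro!: image_eqI[of _ _ "t+t'"] simp: algebra_simps scaleR_add_left)
  next
    fix k a b assume "(a,b) \<in> range (\<lambda>t. (t *\<^sub>R x, t * norm x))"
    then obtain t where "a = t *\<^sub>R x" "b = t * norm x" by auto
    then show "(k *\<^sub>R a, k*b) \<in> range (\<lambda>t. (t *\<^sub>R x, t * norm x))"
      by (auto intro!: image_eqI[of _ _ "k*t"])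
  next
    fix a b assume "(a,b) \<in> range (\<lambda>t. (t *\<^sub>R x, t * norm x))"
    then obtain t where "a = t *\<^sub>R x" "b = t * norm x" by auto
    then show "b \<le> norm a" by (simp add: mult_right_mono)
  qed
  have "\<forall>C\<in>chains A. \<exists>U\<in>A. \<forall>X\<in>C. X \<subseteq> U"
  proof
    fix C assume C: "C \<in> chains A"
    show "\<exists>U\<in>A. \<forall>X\<in>C. X \<subseteq> U"
    proof (cases "C = {}")
      case True then show ?thesis using G0 by blast
    next
      case False
      have CA: "C \<subseteq> A" and ch: "\<forall>X\<in>C. \<forall>Y\<in>C. X \<subseteq> Y \<or> Y \<subseteq> X"
        using C unfolding chains_def chain_subset_def by auto
      have "dom_sub (\<Union>C)" unfolding dom_sub_def
      proof (intro conjI allI impI)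
        obtain X where "X \<in> C" using False by blast
        then show "(0,0) \<in> \<Union>C" using CA dom_sub_0 unfolding A_def by blast
      next
        fix a b a' b' assume "(a,b) \<in> \<Union>C" "(a',b') \<in> \<Union>C"
        then obtain X Y where XY: "X \<in> C" "Y \<in> C" "(a,b) \<in> X" "(a',b') \<in> Y" by auto
        have "X \<subseteq> Y \<or> Y \<subseteq> X" using ch XY by blast
        then obtain Z where Z: "Z \<in> C" "(a,b) \<in> Z" "(a',b') \<in> Z" using XY by blast
        have "dom_sub Z" using Z CA unfolding A_def by blast
        then have "(a+a', b+b') \<in> Z" using dom_sub_add Z by blast
        then show "(a+a', b+b') \<in> \<Union>C" using Z by blast
      next
        fix k a b assume "(a,b) \<in> \<Union>C"
        then obtain Z where Z: "Z \<in> C" "(a,b) \<in> Z" by blast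
        have "dom_sub Z" using Z CA unfolding A_def by blast
        then show "(k *\<^sub>R a, k*b) \<in> \<Union>C" using dom_sub_scale Z by blast
      next
        fix a b assume "(a,b) \<in> \<Union>C"
        then obtain Z where Z: "Z \<in> C" "(a,b) \<in> Z" by blast
        have "dom_sub Z" using Z CA unfolding A_def by blast
        then show "b \<le> norm a" using dom_sub_le Z by blast
      qed
      moreover obtain X where "X \<in> C" using False by blast
      then have "(x, norm x) \<in> \<Union>C" using CA unfolding A_def by blast
      ultimately have "\<Union>C \<in> A" unfolding A_def by blast
      then show ?thesis by blast
    qed
  qed
  from Zorn_Lemma2[OF this] obtain M where M: "M \<in> A" "\<forall>X\<in>A. M \<subseteq> X \<longrightarrow> X = M" by blast
  have Md: "dom_sub M" and Mx: "(x, norm x) \<in> M" using M unfolding A_def by auto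
  have full: "z \<in> fst ` M" for z
  proof (rule ccontr)
    assume "z \<notin> fst ` M"
    from dom_sub_extend[OF Md this] obtain G' where "dom_sub G'" "M \<subseteq> G'" "G' \<noteq> M" by blast
    moreover have "G' \<in> A" using calculation Mx unfolding A_def by blast
    ultimately show False using M by blast
  qed
  define \<phi> where "\<phi> z = (THE b. (z,b) \<in> M)" for z
  have phi: "(z, \<phi> z) \<in> M" for z
  proof -
    obtain b where b: "(z,b) \<in> M" using full[of z] by force
    have "(THE b. (z,b) \<in> M) = b"
      by (rule the_equality) (use b dom_sub_fun[OF Md] in auto)
    then show ?thesis unfolding \<phi>_def using b by simp
  qed
  have phi_eq: "\<phi> z = b" if "(z,b) \<in> M" for z b using dom_sub_fun[OF Md phi that] .
  have add: "\<phi> (a + b) = \<phi> a + \<phi> b" for a b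
    by (rule phi_eq, rule dom_sub_add[OF Md phi phi])
  have scale: "\<phi> (r *\<^sub>R a) = r * \<phi> a" for r a
    by (rule phi_eq, rule dom_sub_scale[OF Md phi])
  have le: "\<phi> a \<le> norm a" for a by (rule dom_sub_le[OF Md phi])
  have absle: "\<bar>\<phi> a\<bar> \<le> norm a" for a
    using le[of a] le[of "(-1) *\<^sub>R a"] scale[of "-1" a] by auto
  have "bounded_linear \<phi>"
    by (rule bounded_linear_intro[where K=1]) (use add scale absle in auto)
  moreover have "\<phi> x = norm x" using phi_eq[OF Mx] .
  ultimately show ?thesis by blast
qed

lemma separate_zero:
  fixes y :: "'a::real_normed_vector"
  assumes "\<And>\<psi>::'a\<Rightarrow>real. bounded_linear \<psi> \<Longrightarrow> \<psi> y = 0"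
  shows "y = 0"
proof -
  obtain \<phi> :: "'a\<Rightarrow>real" where "bounded_linear \<phi>" "\<phi> y = norm y" using hahn_banach_norm[of y] by blast
  moreover have "\<phi> y = 0" using assms calculation(1) by blast
  ultimately have "norm y = 0" by simp
  then show ?thesis by simp
qed


lemma bl_nonneg_abs:
  fixes x :: "'b::banach_lattice"
  assumes "0 \<le> x" shows "sup x (- x) = x"
proof -
  have "-x + 0 \<le> -x + x" by (rule bl_add_left_mono[OF assms])
  then have "-x \<le> 0" by simp
  then have "-x \<le> x" using assms by (rule order_trans)
  then show ?thesis by (rule sup_absorb1)
qed

lemma bl_sub_nonneg:
  fixes a b :: "'b::banach_lattice"
  assumes "a \<le> b" shows "0 \<le> b - a"
proof -
  have "-a + a \<le> -a + b" by (rule bl_add_left_mono[OF assms])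
  then show ?thesis by simp
qed

lemma bl_sub_mono:
  fixes a b c :: "'b::banach_lattice"
  assumes "a \<le> b" shows "a - c \<le> b - c"
proof -
  have "-c + a \<le> -c + b" by (rule bl_add_left_mono[OF assms])
  then show ?thesis by (simp add: algebra_simps)
qed

lemma bl_sandwich:
  fixes l v h :: "'b::banach_lattice"
  assumes "l \<le> v" "v \<le> h" shows "norm (v - l) \<le> norm (h - l)"
proof -
  have 0: "0 \<le> v - l" using bl_sub_nonneg[OF assms(1)] .
  have 1: "v - l \<le> h - l" using bl_sub_mono[OF assms(2)] .
  have 2: "0 \<le> h - l" using 0 1 by (rule order_trans)
  have e1: "sup (v - l) (- (v - l)) = v - l" by (rule bl_nonneg_abs[OF 0])
  have e2: "sup (h - l) (- (h - l)) = h - l" by (rule bl_nonneg_abs[OF 2])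
  have "sup (v - l) (- (v - l)) \<le> sup (h - l) (- (h - l))" unfolding e1 e2 by (rule 1)
  then show ?thesis by (rule bl_norm_mono)
qed

lemma subseq_conv:
  fixes u :: "nat \<Rightarrow> 'a::metric_space"
  assumes "\<And>r::nat\<Rightarrow>nat. strict_mono r \<Longrightarrow> \<exists>q::nat\<Rightarrow>nat. strict_mono q \<and> (u \<circ> r \<circ> q) \<longlonglongrightarrow> x"
  shows "u \<longlonglongrightarrow> x"
proof (rule ccontr)
  assume "\<not> u \<longlonglongrightarrow> x"
  then obtain e where e: "e > 0" "\<forall>no. \<exists>n\<ge>no. \<not> dist (u n) x < e"
    unfolding lim_sequentially by blast
  have "infinite {n. e \<le> dist (u n) x}"
    unfolding infinite_nat_iff_unbounded_le using e(2) by (auto simp: not_less)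
  from infinite_enumerate[OF this] obtain r :: "nat \<Rightarrow> nat"
    where r: "strict_mono r" "\<And>n. e \<le> dist (u (r n)) x" by blast
  from assms[OF r(1)] obtain q where q: "strict_mono q" "(u \<circ> r \<circ> q) \<longlonglongrightarrow> x" by blast
  then obtain no where "\<forall>n\<ge>no. dist ((u \<circ> r \<circ> q) n) x < e"
    unfolding lim_sequentially using e(1) by blast
  then have "dist (u (r (q no))) x < e" by simp
  with r(2)[of "q no"] show False by simp
qed

lemma weak_conv_subseq:
  assumes "weak_conv s x" "strict_mono q" shows "weak_conv (s \<circ> q) x"
  unfolding weak_conv_def
proof (intro allI impI)
  fix \<phi> :: "'a \<Rightarrow> real" assume "bounded_linear \<phi>"
  then have "(\<lambda>n. \<phi> (s n)) \<longlonglongrightarrow> \<phi> x" using assms(1) unfolding weak_conv_def by blast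
  from LIMSEQ_subseq_LIMSEQ[OF this assms(2)] show "(\<lambda>n. \<phi> ((s \<circ> q) n)) \<longlonglongrightarrow> \<phi> x"
    by (simp add: o_def)
qed

theorem theorem3:
  fixes A :: "'a::banach \<Rightarrow> 'b::banach_lattice"
    and f :: 'b and ubar :: 'a
    and fl fu :: "nat \<Rightarrow> 'b"
    and R :: "'a \<Rightarrow> ereal"
    and u :: "nat \<Rightarrow> 'a"
  assumes A_lin: "bounded_linear A"
    and A_inj: "inj A"
    and exact: "A ubar = f"
    and fl_mono: "\<And>n. fl n \<le> fl (Suc n)"
    and fu_mono: "\<And>n. fu (Suc n) \<le> fu n"
    and fl_le: "\<And>n. fl n \<le> f"
    and le_fu: "\<And>n. f \<le> fu n"
    and gap: "(\<lambda>n. norm (fl n - fu n)) \<longlonglongrightarrow> 0"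
    and R_cond:
      "((\<exists>c::real. \<forall>v. ereal c \<le> R v) \<and> lsc R \<and>
          (\<forall>C::real. seq_compact {v. R v \<le> ereal C}))
       \<or> ((\<exists>c::real. \<forall>v. ereal c \<le> R v) \<and> weakly_lsc R \<and>
          (\<forall>C::real. weakly_seq_compact {v. R v \<le> ereal C}) \<and> radon_riesz R)"
    and R_ubar: "R ubar < \<infinity>"
    and u_feas: "\<And>n. fl n \<le> A (u n) \<and> A (u n) \<le> fu n"
    and u_min: "\<And>n v. fl n \<le> A v \<Longrightarrow> A v \<le> fu n \<Longrightarrow> R (u n) \<le> R v"
  shows "u \<longlonglongrightarrow> ubar \<and> (\<lambda>n. R (u n)) \<longlonglongrightarrow> R ubar"
proof -
  have ubar_feas: "fl n \<le> A ubar" "A ubar \<le> fu n" for n using exact fl_le le_fu by auto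
  have Rle: "R (u n) \<le> R ubar" for n using u_min ubar_feas by blast
  have Rinc: "incseq (\<lambda>n. R (u n))"
  proof (rule incseq_SucI)
    fix n
    have "fl n \<le> A (u (Suc n))" using fl_mono[of n] u_feas[of "Suc n"] by (blast intro: order_trans)
    moreover have "A (u (Suc n)) \<le> fu n" using fu_mono[of n] u_feas[of "Suc n"] by (blast intro: order_trans)
    ultimately show "R (u n) \<le> R (u (Suc n))" by (rule u_min)
  qed
  define L where "L = (SUP n. R (u n))"
  have RL: "(\<lambda>n. R (u n)) \<longlonglongrightarrow> L" using LIMSEQ_SUP[OF Rinc] unfolding L_def .
  have LR: "L \<le> R ubar" unfolding L_def by (rule SUP_least) (use Rle in auto)
  have RuL: "R (u n) \<le> L" for n unfolding L_def by (rule SUP_upper) simp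
  obtain c :: real where c: "\<forall>v. ereal c \<le> R v" using R_cond by blast
  define C where "C = real_of_ereal (R ubar)"
  have RC: "R ubar = ereal C"
  proof (cases "R ubar")
    case (real r) then show ?thesis by (simp add: C_def)
  next
    case PInf then show ?thesis using R_ubar by simp
  next
    case MInf then show ?thesis using c[rule_format, of ubar] by simp
  qed
  have ulev: "\<forall>n. u n \<in> {v. R v \<le> ereal C}" using Rle RC by simp
  have Auf: "(\<lambda>n. A (u n)) \<longlonglongrightarrow> f"
  proof -
    have bnd: "norm (A (u n) - f) \<le> 2 * norm (fl n - fu n)" for n
    proof -
      have 1: "norm (A (u n) - fl n) \<le> norm (fu n - fl n)"
        using u_feas[of n] by (intro bl_sandwich) auto
      have 2: "norm (f - fl n) \<le> norm (fu n - fl n)"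
        using fl_le le_fu by (intro bl_sandwich) auto
      have 3: "(A (u n) - fl n) - (f - fl n) = A (u n) - f" by (simp add: algebra_simps)
      have 4: "norm ((A (u n) - fl n) - (f - fl n)) \<le> norm (A (u n) - fl n) + norm (f - fl n)"
        by (rule norm_triangle_ineq4)
      have 5: "norm (fu n - fl n) = norm (fl n - fu n)" by (rule norm_minus_commute)
      show ?thesis using 1 2 4 5 unfolding 3 by linarith
    qed
    have g2: "(\<lambda>n. 2 * norm (fl n - fu n)) \<longlonglongrightarrow> 2 * 0"
      by (rule tendsto_mult[OF tendsto_const gap])
    have ev: "eventually (\<lambda>n. norm (A (u n) - f) \<le> 2 * norm (fl n - fu n)) sequentially"
      by (rule always_eventually) (rule allI, rule bnd)
    have "(\<lambda>n. A (u n) - f) \<longlonglongrightarrow> 0"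
      by (rule Lim_null_comparison[OF ev]) (use g2 in simp)
    then show ?thesis by (rule LIM_zero_cancel)
  qed
  have uniq: "w = ubar" if "A w = f" for w
    by (rule injD[OF A_inj]) (simp add: exact that)
  have Asub: "(\<lambda>n. A ((u \<circ> r) n)) \<longlonglongrightarrow> f" if "strict_mono r" for r :: "nat \<Rightarrow> nat"
    using LIMSEQ_subseq_LIMSEQ[OF Auf that] by (simp add: o_def)
  have main: "L = R ubar \<and> (\<forall>r::nat\<Rightarrow>nat. strict_mono r \<longrightarrow> (\<exists>q::nat\<Rightarrow>nat. strict_mono q \<and> (u \<circ> r \<circ> q) \<longlonglongrightarrow> ubar))"
    using R_cond
  proof
    assume I: "(\<exists>c::real. \<forall>v. ereal c \<le> R v) \<and> lsc R \<and> (\<forall>C::real. seq_compact {v. R v \<le> ereal C})"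
    have sc: "seq_compact {v. R v \<le> ereal C}" using I by blast
    have sub: "\<forall>r::nat\<Rightarrow>nat. strict_mono r \<longrightarrow> (\<exists>q::nat\<Rightarrow>nat. strict_mono q \<and> (u \<circ> r \<circ> q) \<longlonglongrightarrow> ubar)"
    proof (intro allI impI)
      fix r :: "nat \<Rightarrow> nat" assume r: "strict_mono r"
      have "\<And>n. (u \<circ> r) n \<in> {v. R v \<le> ereal C}" using ulev by simp
      from sc[unfolded seq_compact_def, rule_format, of "u \<circ> r", OF this]
      obtain l q where lq: "strict_mono q" "((u \<circ> r) \<circ> q) \<longlonglongrightarrow> l" by blast
      have 1: "(\<lambda>n. A (((u \<circ> r) \<circ> q) n)) \<longlonglongrightarrow> A l"
        using bounded_linear.tendsto[OF A_lin lq(2)] .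
      have 2: "(\<lambda>n. A ((u \<circ> (r \<circ> q)) n)) \<longlonglongrightarrow> f"
        using Asub[OF strict_mono_o[OF r lq(1)]] .
      have "(\<lambda>n. A ((u \<circ> (r \<circ> q)) n)) = (\<lambda>n. A (((u \<circ> r) \<circ> q) n))" by (simp add: o_def)
      with 2 have 3: "(\<lambda>n. A (((u \<circ> r) \<circ> q) n)) \<longlonglongrightarrow> f" by simp
      have "A l = f" using LIMSEQ_unique[OF 1 3] .
      then have "l = ubar" by (rule uniq)
      then show "\<exists>q. strict_mono q \<and> (u \<circ> r \<circ> q) \<longlonglongrightarrow> ubar" using lq by blast
    qed
    have uc: "u \<longlonglongrightarrow> ubar" by (rule subseq_conv) (use sub in blast)
    have "lsc R" using I by (elim conjE)
    then have cl: "closed {v. R v \<le> L}" unfolding lsc_def by (rule spec)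
    have "ubar \<in> {v. R v \<le> L}" by (rule closed_sequentially[OF cl _ uc]) (use RuL in simp)
    then have "L = R ubar" using LR by simp
    with sub show ?thesis by blast
  next
    assume II: "(\<exists>c::real. \<forall>v. ereal c \<le> R v) \<and> weakly_lsc R \<and>
          (\<forall>C::real. weakly_seq_compact {v. R v \<le> ereal C}) \<and> radon_riesz R"
    have wc: "weakly_seq_compact {v. R v \<le> ereal C}" using II by blast
    have claim: "\<exists>q::nat\<Rightarrow>nat. strict_mono q \<and> (u \<circ> r \<circ> q) \<longlonglongrightarrow> ubar \<and> L = R ubar"
      if r: "strict_mono r" for r :: "nat \<Rightarrow> nat"
    proof -
      have "\<And>n. (u \<circ> r) n \<in> {v. R v \<le> ereal C}" using ulev by simp
      from wc[unfolded weakly_seq_compact_def, rule_format, of "u \<circ> r", OF this]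
      obtain l q where lq: "strict_mono q" "weak_conv ((u \<circ> r) \<circ> q) l" by blast
      define s where "s = (u \<circ> r) \<circ> q"
      have sAf: "(\<lambda>n. A (s n)) \<longlonglongrightarrow> f"
        using Asub[OF strict_mono_o[OF r lq(1)]] by (simp add: s_def o_assoc)
      have "A l - f = 0"
      proof (rule separate_zero)
        fix \<psi> :: "'b \<Rightarrow> real" assume psi: "bounded_linear \<psi>"
        have "bounded_linear (\<psi> \<circ> A)" using bounded_linear_compose[OF psi A_lin] by (simp add: o_def)
        then have "(\<lambda>n. (\<psi> \<circ> A) (s n)) \<longlonglongrightarrow> (\<psi> \<circ> A) l"
          using lq(2) unfolding weak_conv_def s_def by blast
        then have 1: "(\<lambda>n. \<psi> (A (s n))) \<longlonglongrightarrow> \<psi> (A l)" by simp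
        have 2: "(\<lambda>n. \<psi> (A (s n))) \<longlonglongrightarrow> \<psi> f" using bounded_linear.tendsto[OF psi sAf] .
        have "\<psi> (A l) = \<psi> f" using LIMSEQ_unique[OF 1 2] .
        then show "\<psi> (A l - f) = 0" using linear_diff[OF bounded_linear.linear[OF psi]] by simp
      qed
      then have "l = ubar" using uniq by simp
      then have ws: "weak_conv s ubar" using lq(2) unfolding s_def by simp
      have sL: "(\<lambda>n. R (s n)) \<longlonglongrightarrow> L"
        using LIMSEQ_subseq_LIMSEQ[OF RL strict_mono_o[OF r lq(1)]] by (simp add: s_def o_def)
      have "R ubar \<le> liminf (\<lambda>n. R (s n))" using II ws unfolding weakly_lsc_def by blast
      also have "liminf (\<lambda>n. R (s n)) = L" by (rule lim_imp_Liminf[OF trivial_limit_sequentially sL])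
      finally have LRu: "L = R ubar" using LR by simp
      then have "s \<longlonglongrightarrow> ubar" using II ws sL unfolding radon_riesz_def by blast
      then show ?thesis using lq(1) LRu unfolding s_def by blast
    qed
    have "L = R ubar" using claim[of id] by (auto simp: strict_mono_def)
    moreover have "\<forall>r::nat\<Rightarrow>nat. strict_mono r \<longrightarrow> (\<exists>q::nat\<Rightarrow>nat. strict_mono q \<and> (u \<circ> r \<circ> q) \<longlonglongrightarrow> ubar)"
      using claim by blast
    ultimately show ?thesis by blast
  qed
  have "u \<longlonglongrightarrow> ubar" using main by (intro subseq_conv) blast
  moreover have "L = R ubar" using main by blast
  then have "(\<lambda>n. R (u n)) \<longlonglongrightarrow> R ubar" using RL by simp
  ultimately show ?thesis by blast
qed

end
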